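(* Fix a positive integer $n$ and form the graph whose vertices are the unordered tuples (multisets) of powers of $2$ with sum $n$, with an edge between a tuple $\lambda$ of length $\ell$ and a tuple $\mu$ of length $\ell-1$ whenever $\mu$ is obtained from $\lambda$ by replacing exactly two entries of $\lambda$ by their sum. Then for every $\ell$, the subgraph induced on all vertices of length $\ell$ and $\ell-1$ is connected; in particular any two tuples of length $\ell$ are joined by a path in this subgraph. *)

theory Defs
  imports Main "HOL-Library.Multiset"
begin

definition pow2 :: "nat \<Rightarrow> bool" where
  "pow2 k \<longleftrightarrow> (\<exists>i. k = 2 ^ i)"

definition pow2_tuples :: "nat \<Rightarrow> nat multiset set" where
  "pow2_tuples n = {M. (\<forall>x \<in># M. pow2 x) \<and> sum_mset M = n}"

definition merge_step :: "nat multiset \<Rightarrow> nat multiset \<Rightarrow> bool" where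
  "merge_step lam mu \<longleftrightarrow>
     (\<exists>a b. {#a, b#} \<subseteq># lam \<and> mu = lam - {#a, b#} + {#a + b#})"

definition tuple_adj :: "nat \<Rightarrow> nat multiset \<Rightarrow> nat multiset \<Rightarrow> bool" where
  "tuple_adj n x y \<longleftrightarrow> x \<in> pow2_tuples n \<and> y \<in> pow2_tuples n \<and>
     (merge_step x y \<or> merge_step y x)"

definition layer :: "nat \<Rightarrow> nat \<Rightarrow> nat multiset set" where
  "layer n l = {M \<in> pow2_tuples n. size M = l \<or> size M + 1 = l}"

definition induced_adj :: "nat multiset set \<Rightarrow> (nat multiset \<Rightarrow> nat multiset \<Rightarrow> bool)
    \<Rightarrow> nat multiset \<Rightarrow> nat multiset \<Rightarrow> bool" where
  "induced_adj V E x y \<longleftrightarrow> x \<in> V \<and> y \<in> V \<and> E x y"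

end

theory Submission
  imports Defs
begin

abbreviation conn where "conn n l \<equiv> (induced_adj (layer n l) (tuple_adj n))\<^sup>*\<^sup>*"

lemma pow2_pos: "pow2 x \<Longrightarrow> x \<ge> 1"
  unfolding pow2_def by auto

lemma pow2_even: "pow2 x \<Longrightarrow> x \<noteq> 1 \<Longrightarrow> even x \<and> pow2 (x div 2)"
proof -
  assume "pow2 x" "x \<noteq> 1"
  then obtain i where i: "x = 2^i" unfolding pow2_def by blast
  with \<open>x \<noteq> 1\<close> obtain j where "i = Suc j" by (cases i) auto
  then have "x = 2 * 2^j" using i by simp
  then show ?thesis unfolding pow2_def by auto
qed

lemma pow2_double: "pow2 x \<Longrightarrow> pow2 (2*x)"
  unfolding pow2_def by (metis power_Suc)

lemma pow2_ge4: "pow2 x \<Longrightarrow> x \<noteq> 1 \<Longrightarrow> x \<noteq> 2 \<Longrightarrow> x \<ge> 4"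
proof -
  assume "pow2 x" "x \<noteq> 1" "x \<noteq> 2"
  then obtain i where i: "x = 2^i" unfolding pow2_def by blast
  with \<open>x \<noteq> 1\<close> \<open>x \<noteq> 2\<close> have "i \<ge> 2" by (cases i; cases "i - 1") auto
  then have "(2::nat)^2 \<le> 2^i" by (rule power_increasing) simp
  then show ?thesis using i by simp
qed

lemma parity: "(\<forall>x\<in>#M. pow2 x) \<Longrightarrow> even (sum_mset M) = even (count M 1)"
proof (induction M)
  case empty then show ?case by simp
next
  case (add x M)
  then show ?case using pow2_even[of x] by (cases "x = 1") auto
qed

lemma size_lower: "(\<forall>x\<in>#M. k \<le> x) \<Longrightarrow> k * size M \<le> sum_mset M"
  by (induction M) auto

lemma size_upper: "(\<forall>x\<in>#M. x \<le> 2 \<and> 1 \<le> x) \<Longrightarrow> sum_mset M + count M 1 \<le> 2 * size M"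
proof (induction M)
  case empty then show ?case by simp
next
  case (add x M)
  then show ?case by (cases "x = 1") auto
qed

lemma conn_sym_step: "induced_adj V (tuple_adj n) x y \<Longrightarrow> induced_adj V (tuple_adj n) y x"
  unfolding induced_adj_def tuple_adj_def by auto

lemma conn_sym: "conn n l x y \<Longrightarrow> conn n l y x"
proof (induction rule: rtranclp_induct)
  case base then show ?case by simp
next
  case (step y z)
  then show ?case using conn_sym_step
    by (metis converse_rtranclp_into_rtranclp)
qed

lemma edge: "x \<in> layer n l \<Longrightarrow> y \<in> layer n l \<Longrightarrow> merge_step x y \<Longrightarrow> conn n l x y \<and> conn n l y x"
proof -
  assume a: "x \<in> layer n l" "y \<in> layer n l" "merge_step x y"
  then have "x \<in> pow2_tuples n" "y \<in> pow2_tuples n" unfolding layer_def by auto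
  then have "induced_adj (layer n l) (tuple_adj n) x y" "induced_adj (layer n l) (tuple_adj n) y x"
    using a unfolding induced_adj_def tuple_adj_def by auto
  then show ?thesis by auto
qed

lemma merge_shift: "merge_step x y \<Longrightarrow> merge_step (x + {#p#}) (y + {#p#})"
  unfolding merge_step_def
proof (elim exE conjE)
  fix a b assume s: "{#a, b#} \<subseteq># x" and y: "y = x - {#a, b#} + {#a + b#}"
  have s2: "{#a, b#} \<subseteq># x + {#p#}" using s subset_mset.order_trans mset_subset_eq_add_left by blast
  have "x + {#p#} - {#a, b#} = x - {#a, b#} + {#p#}" by (rule subset_mset.add_diff_assoc2[OF s, symmetric])
  then have "y + {#p#} = x + {#p#} - {#a, b#} + {#a + b#}" using y by simp
  then show "\<exists>a b. {#a, b#} \<subseteq># x + {#p#} \<and> y + {#p#} = x + {#p#} - {#a, b#} + {#a + b#}"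
    using s2 by blast
qed

lemma merge_double: "merge_step x y \<Longrightarrow> merge_step (image_mset ((*) 2) x) (image_mset ((*) 2) y)"
  unfolding merge_step_def
proof (elim exE conjE)
  fix a b assume s: "{#a, b#} \<subseteq># x" and y: "y = x - {#a, b#} + {#a + b#}"
  have "{#2*a, 2*b#} \<subseteq># image_mset ((*) 2) x"
    using image_mset_subseteq_mono[OF s, of "(*) 2"] by simp
  moreover have "image_mset ((*) 2) y = image_mset ((*) 2) x - {#2*a, 2*b#} + {#2*a + 2*b#}"
    using y s by (simp add: image_mset_Diff)
  ultimately show "\<exists>a b. {#a, b#} \<subseteq># image_mset ((*) 2) x \<and>
          image_mset ((*) 2) y = image_mset ((*) 2) x - {#a, b#} + {#a + b#}" by blast
qed

lemma layer_shift: "x \<in> layer m k \<Longrightarrow> pow2 p \<Longrightarrow> x + {#p#} \<in> layer (m+p) (Suc k)"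
  unfolding layer_def pow2_tuples_def by auto

lemma shift: assumes "conn m k x y" "pow2 p" shows "conn (m+p) (Suc k) (x+{#p#}) (y+{#p#})"
  using assms(1)
proof (induction rule: rtranclp_induct)
  case base then show ?case by simp
next
  case (step y z)
  have "induced_adj (layer (m+p) (Suc k)) (tuple_adj (m+p)) (y+{#p#}) (z+{#p#})"
    using step(2) layer_shift[OF _ assms(2)] merge_shift
    unfolding induced_adj_def tuple_adj_def layer_def by blast
  then show ?case using step(3) by (meson rtranclp.rtrancl_into_rtrancl)
qed

lemma sum_double: "sum_mset (image_mset ((*) 2) x) = 2 * sum_mset (x::nat multiset)"
  by (induction x) auto

lemma layer_double: "x \<in> layer m k \<Longrightarrow> image_mset ((*) 2) x \<in> layer (2*m) k"
  unfolding layer_def pow2_tuples_def using pow2_double by (auto simp: sum_double)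

lemma double: assumes "conn m k x y" shows "conn (2*m) k (image_mset ((*) 2) x) (image_mset ((*) 2) y)"
  using assms(1)
proof (induction rule: rtranclp_induct)
  case base then show ?case by simp
next
  case (step y z)
  have "induced_adj (layer (2*m) k) (tuple_adj (2*m)) (image_mset ((*) 2) y) (image_mset ((*) 2) z)"
    using step(2) layer_double merge_double
    unfolding induced_adj_def tuple_adj_def layer_def by blast
  then show ?case using step(3) by (meson rtranclp.rtrancl_into_rtrancl)
qed

lemma sub11: "count x 1 \<ge> 2 \<Longrightarrow> {#1, 1#} \<subseteq># x"
  by (simp add: subseteq_mset_def) 

lemma merge11:
  assumes "count x 1 \<ge> 2" "x \<in> pow2_tuples n"
  shows "merge_step x (x - {#1,1#} + {#2#})" "x - {#1,1#} + {#2#} \<in> pow2_tuples n"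
    "size (x - {#1,1#} + {#2#}) + 1 = size x" "count (x - {#1,1#} + {#2#}) 1 + 2 = count x 1"
proof -
  have s: "{#1, 1#} \<subseteq># x" using sub11 assms(1) .
  show "merge_step x (x - {#1,1#} + {#2#})" unfolding merge_step_def using s
    by (metis one_add_one)
  have "x - {#1,1#} + {#1,1#} = x" by (rule subset_mset.diff_add[OF s])
  then have "sum_mset (x - {#1,1#}) + sum_mset {#1,1#} = sum_mset x" by (metis sum_mset.union)
  then have "sum_mset (x - {#1,1#}) + 2 = sum_mset x" by simp
  moreover have p2: "pow2 2" unfolding pow2_def by (rule exI[of _ 1]) simp
  moreover have "\<forall>y\<in>#x - {#1,1#} + {#2#}. pow2 y" using assms(2) p2 unfolding pow2_tuples_def
    by (auto dest: in_diffD)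
  ultimately show "x - {#1,1#} + {#2#} \<in> pow2_tuples n" using assms(2)
    unfolding pow2_tuples_def by auto
  have "size (x - {#1,1#} + {#1,1#}) = size x" using \<open>x - {#1,1#} + {#1,1#} = x\<close>
    by (rule arg_cong)
  then show "size (x - {#1,1#} + {#2#}) + 1 = size x" unfolding size_union by simp
  show "count (x - {#1,1#} + {#2#}) 1 + 2 = count x 1" using assms(1) by simp
qed

lemma split2:
  assumes "2*h \<in># y" "y \<in> pow2_tuples n" "pow2 h"
  shows "merge_step (y - {#2*h#} + {#h,h#}) y" "y - {#2*h#} + {#h,h#} \<in> pow2_tuples n"
    "size (y - {#2*h#} + {#h,h#}) = size y + 1"
    "h \<noteq> 1 \<Longrightarrow> count (y - {#2*h#} + {#h,h#}) 1 = count y 1"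
proof -
  let ?z = "y - {#2*h#} + {#h,h#}"
  have e: "?z - {#h,h#} + {#h+h#} = y" using assms(1) by (simp add: mult_2)
  have "{#h,h#} \<subseteq># ?z" by simp
  then show "merge_step ?z y" unfolding merge_step_def
    by (intro exI[of _ h]) (rule conjI[OF _ e[symmetric]])
  have ins: "add_mset (2*h) (y - {#2*h#}) = y" by (rule insert_DiffM[OF assms(1)])
  then have "sum_mset (add_mset (2*h) (y - {#2*h#})) = sum_mset y" by simp
  then have "sum_mset (y - {#2*h#}) + 2*h = sum_mset y" by simp
  then show "?z \<in> pow2_tuples n" using assms(2,3) unfolding pow2_tuples_def
    by (auto dest: in_diffD)
  have "size (add_mset (2*h) (y - {#2*h#})) = size y" using ins by simp
  then show "size ?z = size y + 1" by simp
  show "h \<noteq> 1 \<Longrightarrow> count ?z 1 = count y 1" using assms(3) pow2_even[of h] by auto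
qed

lemma count1_ge2:
  assumes "x \<in> pow2_tuples n" "even n" "count x 1 \<noteq> 0" shows "count x 1 \<ge> 2"
proof -
  have "even (count x 1)" using parity[of x] assms unfolding pow2_tuples_def by auto
  then show ?thesis using assms(3) by presburger
qed

lemma lemC:
  assumes "even n" "mu \<in> layer n l" "\<forall>x\<in>#mu. x \<noteq> 1"
  shows "lam \<in> layer n l \<Longrightarrow> \<exists>b\<in>layer n l. (\<forall>x\<in>#b. x\<noteq>1) \<and> conn n l lam b"
proof (induction "count lam 1" arbitrary: lam rule: less_induct)
  case less
  show ?case
  proof (cases "count lam 1 = 0")
    case True
    then have "\<forall>x\<in>#lam. x \<noteq> 1" by (metis count_eq_zero_iff)
    then show ?thesis using less(2) by (intro bexI[of _ lam]) auto
  next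
    case False
    have lp: "lam \<in> pow2_tuples n" using less(2) unfolding layer_def by auto
    have c2: "count lam 1 \<ge> 2" using count1_ge2[OF lp assms(1) False] .
    note M = merge11[OF c2 lp]
    let ?l1 = "lam - {#1,1#} + {#2#}"
    show ?thesis
    proof (cases "size lam = l")
      case True
      then have l1: "?l1 \<in> layer n l" using M(2,3) unfolding layer_def by auto
      have "conn n l lam ?l1" using edge[OF less(2) l1 M(1)] by blast
      moreover obtain b where "b\<in>layer n l" "\<forall>x\<in>#b. x\<noteq>1" "conn n l ?l1 b"
        using less(1)[OF _ l1] M(4) by force
      ultimately show ?thesis by (meson rtranclp_trans)
    next
      case False
      then have sl: "size lam + 1 = l" using less(2) unfolding layer_def by auto
      show ?thesis
      proof (cases "\<exists>x\<in>#lam. x \<ge> 4")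
        case True
        then obtain x where x: "x \<in># lam" "x \<ge> 4" by blast
        have px: "pow2 x" using x lp unfolding pow2_tuples_def by auto
        have xe: "even x" "pow2 (x div 2)" using pow2_even[OF px] x(2) by auto
        define h where "h = x div 2"
        have hx: "2*h = x" using xe h_def by simp
        have h1: "h \<noteq> 1" using x(2) hx by auto
        note S = split2[of h lam n, unfolded hx, OF x(1) lp xe(2)[folded h_def]]
        let ?l2 = "lam - {#x#} + {#h,h#}"
        have l2: "?l2 \<in> layer n l" using S(2,3) sl unfolding layer_def by auto
        have c22: "count ?l2 1 = count lam 1" using S(4) h1 by simp
        have e1: "conn n l lam ?l2" using edge[OF l2 less(2) S(1)] by blast
        have c2': "count ?l2 1 \<ge> 2" using c2 c22 by simp
        have l2p: "?l2 \<in> pow2_tuples n" using S(2) .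
        note M2 = merge11[OF c2' l2p]
        let ?l3 = "?l2 - {#1,1#} + {#2#}"
        have l3: "?l3 \<in> layer n l" using M2(2,3) S(3) sl unfolding layer_def by auto
        have e2: "conn n l ?l2 ?l3" using edge[OF l2 l3 M2(1)] by blast
        obtain b where "b\<in>layer n l" "\<forall>x\<in>#b. x\<noteq>1" "conn n l ?l3 b"
          using less(1)[OF _ l3] M2(4) c22 by force
        then show ?thesis using e1 e2 by (meson rtranclp_trans)
      next
        case False
        have b12: "\<forall>x\<in>#lam. x \<le> 2 \<and> 1 \<le> x"
        proof
          fix x assume x: "x \<in># lam"
          then have "pow2 x" using lp unfolding pow2_tuples_def by auto
          then show "x \<le> 2 \<and> 1 \<le> x" using False x pow2_ge4[of x] pow2_pos[of x] by force
        qed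
        have u: "sum_mset lam + count lam 1 \<le> 2 * size lam" using size_upper[OF b12] .
        have mp: "mu \<in> pow2_tuples n" and ms: "size mu = l \<or> size mu + 1 = l"
          using assms(2) unfolding layer_def by auto
        have "\<forall>x\<in>#mu. 2 \<le> x"
        proof
          fix x assume x: "x \<in># mu"
          then have "pow2 x" using mp unfolding pow2_tuples_def by auto
          then show "2 \<le> x" using x assms(3) pow2_pos[of x] by force
        qed
        from size_lower[OF this] have "2 * size mu \<le> n" using mp unfolding pow2_tuples_def by auto
        moreover have "sum_mset lam = n" using lp unfolding pow2_tuples_def by auto
        ultimately show ?thesis using u ms sl c2 by linarith
      qed
    qed
  qed
qed



lemma noone_even: "x \<in> pow2_tuples n \<Longrightarrow> \<forall>y\<in>#x. y \<noteq> 1 \<Longrightarrow> even n"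
proof -
  assume a: "x \<in> pow2_tuples n" "\<forall>y\<in>#x. y \<noteq> 1"
  then have "count x 1 = 0" by (metis count_eq_zero_iff)
  then show "even n" using parity[of x] a(1) unfolding pow2_tuples_def by auto
qed

lemma main_gen: "lam \<in> layer n l \<Longrightarrow> mu \<in> layer n l \<Longrightarrow> conn n l lam mu"
proof (induction n arbitrary: l lam mu rule: less_induct)
  case (less n)
  have ones: "conn n l a b" if a: "a \<in> layer n l" and b: "b \<in> layer n l"
    and a1: "1 \<in># a" and b1: "1 \<in># b" for a b
  proof -
    have ane: "a \<noteq> {#}" using a1 by auto
    then have sa: "size a \<ge> 1" by (simp add: Suc_le_eq nonempty_has_size)
    have "l \<ge> 1" using a sa unfolding layer_def by auto
    then obtain k where k: "l = Suc k" using not0_implies_Suc by force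
    have "sum_mset (add_mset 1 (a - {#1#})) = sum_mset a" using insert_DiffM[OF a1] by simp
    then have n1: "n \<ge> 1" using a unfolding layer_def pow2_tuples_def by auto
    have red: "x - {#1#} \<in> layer (n-1) k" if x: "x \<in> layer n l" "1 \<in># x" for x
    proof -
      have ins: "add_mset 1 (x - {#1#}) = x" using insert_DiffM[OF x(2)] .
      then have "sum_mset (add_mset 1 (x - {#1#})) = sum_mset x" by simp
      then have "sum_mset (x - {#1#}) + 1 = sum_mset x" by simp
      moreover have "size (add_mset 1 (x - {#1#})) = size x" using ins by simp
      then have "size (x - {#1#}) + 1 = size x" by simp
      ultimately show ?thesis using x(1) k unfolding layer_def pow2_tuples_def
        by (auto dest: in_diffD)
    qed
    have "conn (n-1) k (a - {#1#}) (b - {#1#})"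
      using less(1)[OF _ red[OF a a1] red[OF b b1]] n1 by simp
    from shift[OF this, of 1] have "conn (n-1+1) (Suc k) (a - {#1#} + {#1#}) (b - {#1#} + {#1#})"
      unfolding pow2_def by (metis power_0)
    then show ?thesis using n1 k a1 b1 by simp
  qed
  have evens: "conn n l a b" if a: "a \<in> layer n l" and b: "b \<in> layer n l"
    and a1: "\<forall>x\<in>#a. x \<noteq> 1" and b1: "\<forall>x\<in>#b. x \<noteq> 1" for a b
  proof (cases "n = 0")
    case True
    have "x = {#}" if "x \<in> layer n l" for x
    proof -
      have "\<forall>y\<in>#x. pow2 y" "sum_mset x = 0" using that True unfolding layer_def pow2_tuples_def by auto
      then have z: "\<forall>y\<in>#x. pow2 y \<and> y = 0" by (simp add: sum_mset_0_iff)
      show ?thesis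
      proof (rule ccontr)
        assume "x \<noteq> {#}"
        then obtain y where "y \<in># x" by (meson multiset_nonemptyE)
        then show False using z pow2_pos[of y] by auto
      qed
    qed
    then have "a = {#}" "b = {#}" using a b by auto
    then show ?thesis by simp
  next
    case False
    have ev: "even n" using noone_even a a1 unfolding layer_def by auto
    have hal: "image_mset (\<lambda>y. y div 2) x \<in> layer (n div 2) l \<and> image_mset ((*) 2) (image_mset (\<lambda>y. y div 2) x) = x"
      if x: "x \<in> layer n l" "\<forall>y\<in>#x. y \<noteq> 1" for x
    proof -
      have pe: "\<forall>y\<in>#x. pow2 y \<and> y \<noteq> 1" using x unfolding layer_def pow2_tuples_def by auto
      have id: "image_mset ((*) 2) (image_mset (\<lambda>y. y div 2) x) = x"
      proof -
        have "image_mset ((*) 2) (image_mset (\<lambda>y. y div 2) x) = image_mset id x"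
          unfolding multiset.map_comp
          by (rule image_mset_cong) (use pe pow2_even in auto)
        then show ?thesis by simp
      qed
      have "2 * sum_mset (image_mset (\<lambda>y. y div 2) x) = sum_mset x"
        using sum_double[of "image_mset (\<lambda>y. y div 2) x"] id by simp
      then show ?thesis using id x pe pow2_even unfolding layer_def pow2_tuples_def by auto
    qed
    have "conn (n div 2) l (image_mset (\<lambda>y. y div 2) a) (image_mset (\<lambda>y. y div 2) b)"
      using less(1)[OF _ conjunct1[OF hal[OF a a1]] conjunct1[OF hal[OF b b1]]] False by simp
    from double[OF this] show ?thesis using hal[OF a a1] hal[OF b b1] ev by simp
  qed
  have mixed: "conn n l a b" if a: "a \<in> layer n l" and b: "b \<in> layer n l"
    and a1: "1 \<in># a" and b1: "\<forall>x\<in>#b. x \<noteq> 1" for a b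
  proof -
    have ev: "even n" using noone_even b b1 unfolding layer_def by auto
    obtain c where c: "c \<in> layer n l" "\<forall>x\<in>#c. x\<noteq>1" "conn n l a c"
      using lemC[OF ev b b1 a] by blast
    then show ?thesis using evens[OF c(1) b c(2) b1] by (meson rtranclp_trans)
  qed
  show ?case
  proof (cases "1 \<in># lam")
    case True
    then show ?thesis
    proof (cases "1 \<in># mu")
      case T2: True
      show ?thesis using ones[OF less(2,3) True T2] .
    next
      case False
      then show ?thesis using mixed[OF less(2,3) True] by blast
    qed
  next
    case False
    show ?thesis
    proof (cases "1 \<in># mu")
      case True
      then show ?thesis using conn_sym[OF mixed[OF less(3,2) True]] False by blast
    next
      case F2: False
      show ?thesis using evens[OF less(2,3)] False F2 by blast
    qed
  qed
qed


theorem mainTheorem11: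
  fixes n l :: nat and lam mu :: "nat multiset"
  assumes "n > 0"
    and "lam \<in> layer n l" and "mu \<in> layer n l"
  shows "(induced_adj (layer n l) (tuple_adj n))\<^sup>*\<^sup>* lam mu"
  using main_gen[OF assms(2,3)] .

end
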